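(* Let $G$ be a graph and $S\subseteq V(G)$. For any nonempty set $C \subseteq V(G)$ such that $G[C]$ is connected, the following conditions are equivalent: (i) $N(C)$ is an important $C-S$ separator; (ii) for every $v \in C$, $N(C)$ is an important $\{v\}-S$ separator; (iii) there exists $v \in C$ such that $N(C)$ is an important $\{v\}-S$ separator.
   Context: $N(C)$ is the set of vertices outside $C$ with a neighbour in $C$. For $X,Y\subseteq V(G)$, a set $W\subseteq V(G)$ is an $X-Y$ separator if no connected component of $G\setminus W$ contains both a vertex of $X$ and a vertex of $Y$. For a graph $H$ and $Z\subseteq V(H)$, $R_H(Z)$ is the set of vertices reachable from $Z$ in $H$. An inclusion-wise minimal $X-Y$ separator $W$ is an important $X-Y$ separator if there is no $X-Y$ separator $W'$ with $|W'|\le|W|$ and $R_{G\setminus W}(X\setminus W)\subsetneq R_{G\setminus W'}(X\setminus W')$. *)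

theory Defs
  imports Main
begin

definition graph :: "'a set \<Rightarrow> ('a \<Rightarrow> 'a \<Rightarrow> bool) \<Rightarrow> bool" where
  "graph V E \<longleftrightarrow> finite V \<and> (\<forall>u v. E u v \<longrightarrow> u \<in> V \<and> v \<in> V)
     \<and> (\<forall>u v. E u v \<longrightarrow> E v u) \<and> (\<forall>v. \<not> E v v)"

definition induced_adj :: "('a \<Rightarrow> 'a \<Rightarrow> bool) \<Rightarrow> 'a set \<Rightarrow> 'a \<Rightarrow> 'a \<Rightarrow> bool" where
  "induced_adj E U u v \<longleftrightarrow> u \<in> U \<and> v \<in> U \<and> E u v"

definition reach :: "('a \<Rightarrow> 'a \<Rightarrow> bool) \<Rightarrow> 'a set \<Rightarrow> 'a set \<Rightarrow> 'a set" where
  "reach E U Z = {v \<in> U. \<exists>z \<in> Z \<inter> U. (induced_adj E U)\<^sup>*\<^sup>* z v}"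

definition connected_induced :: "'a set \<Rightarrow> ('a \<Rightarrow> 'a \<Rightarrow> bool) \<Rightarrow> 'a set \<Rightarrow> bool" where
  "connected_induced V E C \<longleftrightarrow> C \<subseteq> V \<and> (\<forall>u \<in> C. \<forall>v \<in> C. (induced_adj E C)\<^sup>*\<^sup>* u v)"

definition nbhd :: "'a set \<Rightarrow> ('a \<Rightarrow> 'a \<Rightarrow> bool) \<Rightarrow> 'a set \<Rightarrow> 'a set" where
  "nbhd V E C = {v \<in> V - C. \<exists>u \<in> C. E u v}"

definition separator :: "'a set \<Rightarrow> ('a \<Rightarrow> 'a \<Rightarrow> bool) \<Rightarrow> 'a set \<Rightarrow> 'a set \<Rightarrow> 'a set \<Rightarrow> bool" where
  "separator V E X Y W \<longleftrightarrow> W \<subseteq> V \<and>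
     (\<forall>x \<in> X - W. \<forall>y \<in> Y - W. \<not> (induced_adj E (V - W))\<^sup>*\<^sup>* x y)"

definition important_separator :: "'a set \<Rightarrow> ('a \<Rightarrow> 'a \<Rightarrow> bool) \<Rightarrow> 'a set \<Rightarrow> 'a set \<Rightarrow> 'a set \<Rightarrow> bool" where
  "important_separator V E X Y W \<longleftrightarrow>
     separator V E X Y W \<and> (\<forall>W'. W' \<subset> W \<longrightarrow> \<not> separator V E X Y W') \<and>
     \<not> (\<exists>W'. separator V E X Y W' \<and> card W' \<le> card W \<and>
            reach E (V - W) (X - W) \<subset> reach E (V - W') (X - W'))"

end

theory Submission
  imports Defs
begin

lemma conn_lift:
  assumes "connected_induced V E C" "C \<inter> W = {}" "u \<in> C" "w \<in> C"
  shows "(induced_adj E (V - W))\<^sup>*\<^sup>* u w"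
proof -
  have "(induced_adj E C)\<^sup>*\<^sup>* u w" using assms unfolding connected_induced_def by blast
  moreover have "\<And>a b. induced_adj E C a b \<Longrightarrow> induced_adj E (V - W) a b"
    using assms(1,2) unfolding connected_induced_def induced_adj_def by blast
  ultimately show ?thesis by (metis mono_rtranclp)
qed

lemma rt_eq:
  assumes "connected_induced V E C" "C \<inter> W = {}" "v \<in> C" "c \<in> C"
  shows "(induced_adj E (V - W))\<^sup>*\<^sup>* c x \<longleftrightarrow> (induced_adj E (V - W))\<^sup>*\<^sup>* v x"
proof
  assume "(induced_adj E (V - W))\<^sup>*\<^sup>* c x"
  moreover have "(induced_adj E (V - W))\<^sup>*\<^sup>* v c" using conn_lift[OF assms(1,2,3,4)] .
  ultimately show "(induced_adj E (V - W))\<^sup>*\<^sup>* v x" by (rule rtranclp_trans[rotated])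
next
  assume "(induced_adj E (V - W))\<^sup>*\<^sup>* v x"
  moreover have "(induced_adj E (V - W))\<^sup>*\<^sup>* c v" using conn_lift[OF assms(1,2,4,3)] .
  ultimately show "(induced_adj E (V - W))\<^sup>*\<^sup>* c x" by (rule rtranclp_trans[rotated])
qed

lemma sep_eq:
  assumes "connected_induced V E C" "C \<inter> W = {}" "v \<in> C"
  shows "separator V E C S W \<longleftrightarrow> separator V E {v} S W"
proof -
  have "C - W = C" using assms(2) by blast
  moreover have "{v} - W = {v}" using assms by blast
  ultimately show ?thesis unfolding separator_def
    using rt_eq[OF assms] assms(3) by (simp only:) blast
qed

lemma reach_eq:
  assumes "connected_induced V E C" "C \<inter> W = {}" "v \<in> C"
  shows "reach E (V - W) (C - W) = reach E (V - W) ({v} - W)"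
proof -
  have CV: "C \<subseteq> V" using assms(1) unfolding connected_induced_def by blast
  have "(C - W) \<inter> (V - W) = C" using CV assms(2) by blast
  moreover have "({v} - W) \<inter> (V - W) = {v}" using CV assms by blast
  ultimately show ?thesis unfolding reach_def
    using rt_eq[OF assms] assms(3) by (simp only:) blast
qed

lemma C_sub_reach:
  assumes "connected_induced V E C" "C \<inter> W = {}"
  shows "C \<subseteq> reach E (V - W) (C - W)"
proof -
  have CV: "C \<subseteq> V" using assms(1) unfolding connected_induced_def by blast
  show ?thesis unfolding reach_def using CV assms(2) by blast
qed

lemma reach_sub: "reach E U Z \<subseteq> U" unfolding reach_def by blast

lemma imp_eq:
  assumes "connected_induced V E C" "v \<in> C"
  shows "important_separator V E C S (nbhd V E C) \<longleftrightarrow> important_separator V E {v} S (nbhd V E C)"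
proof -
  let ?N = "nbhd V E C"
  have NC: "C \<inter> ?N = {}" unfolding nbhd_def by blast
  have sub: "\<And>W'. W' \<subset> ?N \<Longrightarrow> C \<inter> W' = {}" using NC by blast
  have rN: "reach E (V - ?N) (C - ?N) = reach E (V - ?N) ({v} - ?N)"
    using reach_eq[OF assms(1) NC assms(2)] .
  have CrN: "C \<subseteq> reach E (V - ?N) (C - ?N)" using C_sub_reach[OF assms(1) NC] .
  have key: "C \<inter> W' = {}" if "reach E (V - ?N) (C - ?N) \<subset> reach E (V - W') (X - W')" for W' X
  proof -
    have "C \<subseteq> V - W'" using CrN that reach_sub[of E "V - W'" "X - W'"] by blast
    then show ?thesis by blast
  qed
  have A: "(\<exists>W'. separator V E C S W' \<and> card W' \<le> card ?N \<and>
            reach E (V - ?N) (C - ?N) \<subset> reach E (V - W') (C - W'))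
        \<longleftrightarrow> (\<exists>W'. separator V E {v} S W' \<and> card W' \<le> card ?N \<and>
            reach E (V - ?N) ({v} - ?N) \<subset> reach E (V - W') ({v} - W'))"
  proof
    assume "\<exists>W'. separator V E C S W' \<and> card W' \<le> card ?N \<and>
            reach E (V - ?N) (C - ?N) \<subset> reach E (V - W') (C - W')"
    then obtain W' where W': "separator V E C S W'" "card W' \<le> card ?N"
        "reach E (V - ?N) (C - ?N) \<subset> reach E (V - W') (C - W')" by blast
    have d: "C \<inter> W' = {}" using key[OF W'(3)] .
    show "\<exists>W'. separator V E {v} S W' \<and> card W' \<le> card ?N \<and>
            reach E (V - ?N) ({v} - ?N) \<subset> reach E (V - W') ({v} - W')"
    proof (intro exI conjI)
      show "separator V E {v} S W'" using W'(1) sep_eq[OF assms(1) d assms(2)] by simp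
      show "card W' \<le> card ?N" by (rule W'(2))
      show "reach E (V - ?N) ({v} - ?N) \<subset> reach E (V - W') ({v} - W')"
        using W'(3) reach_eq[OF assms(1) d assms(2)] rN by simp
    qed
  next
    assume "\<exists>W'. separator V E {v} S W' \<and> card W' \<le> card ?N \<and>
            reach E (V - ?N) ({v} - ?N) \<subset> reach E (V - W') ({v} - W')"
    then obtain W' where W': "separator V E {v} S W'" "card W' \<le> card ?N"
        "reach E (V - ?N) ({v} - ?N) \<subset> reach E (V - W') ({v} - W')" by blast
    have d: "C \<inter> W' = {}" using key[of W' "{v}"] W'(3) rN by simp
    show "\<exists>W'. separator V E C S W' \<and> card W' \<le> card ?N \<and>
            reach E (V - ?N) (C - ?N) \<subset> reach E (V - W') (C - W')"
    proof (intro exI conjI)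
      show "separator V E C S W'" using W'(1) sep_eq[OF assms(1) d assms(2)] by simp
      show "card W' \<le> card ?N" by (rule W'(2))
      show "reach E (V - ?N) (C - ?N) \<subset> reach E (V - W') (C - W')"
        using W'(3) reach_eq[OF assms(1) d assms(2)] rN by simp
    qed
  qed
  have B: "(\<forall>W'. W' \<subset> ?N \<longrightarrow> \<not> separator V E C S W') \<longleftrightarrow>
           (\<forall>W'. W' \<subset> ?N \<longrightarrow> \<not> separator V E {v} S W')"
    using sep_eq[OF assms(1) sub assms(2)] by (meson)
  have C0: "separator V E C S ?N \<longleftrightarrow> separator V E {v} S ?N" using sep_eq[OF assms(1) NC assms(2)] .
  show ?thesis unfolding important_separator_def
    by (simp only: A B C0)
qed

theorem lemma3p3:
  fixes V :: "'a set" and E :: "'a \<Rightarrow> 'a \<Rightarrow> bool" and S C :: "'a set"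
  assumes "graph V E"
    and "S \<subseteq> V"
    and "C \<noteq> {}"
    and "connected_induced V E C"
  shows "(important_separator V E C S (nbhd V E C)
            \<longleftrightarrow> (\<forall>v \<in> C. important_separator V E {v} S (nbhd V E C)))
       \<and> ((\<forall>v \<in> C. important_separator V E {v} S (nbhd V E C))
            \<longleftrightarrow> (\<exists>v \<in> C. important_separator V E {v} S (nbhd V E C)))"
  using imp_eq[OF assms(4)] assms(3) by blast

end
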